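(* Let $\mathcal{H}$ be a hypertree, $T$ a host tree of $\mathcal{H}$, and $u,v$ two different vertices of $\mathcal{H}$. Then $uv$ is an edge of some host tree of $\mathcal{H}$ if and only if there exists an edge $e$ of the path $T[u,v]$ such that $I_\mathcal{H}(uv)=I_\mathcal{H}(e)$.
   Context: A hypergraph $\mathcal{H}$ has a finite vertex set $V(\mathcal{H})$ and a finite family of nonempty subsets (edges). A host tree is a tree on $V(\mathcal{H})$ in which every edge induces a connected subgraph; a hypertree is a hypergraph with a host tree. For $V'\subseteq V(\mathcal{H})$, $I_\mathcal{H}(V')$ is the intersection of all edges of $\mathcal{H}$ containing $V'$, or $V(\mathcal{H})$ if none does; for a pair, $I_\mathcal{H}(xy)=I_\mathcal{H}(\{x,y\})$, and for a tree edge $e=xy$, $I_\mathcal{H}(e)=I_\mathcal{H}(\{x,y\})$. $T[u,v]$ is the path in $T$ from $u$ to $v$. *)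

theory Defs
  imports Main
begin

definition hypergraph :: "'a set \<Rightarrow> 'a set set \<Rightarrow> bool" where
  "hypergraph V E \<longleftrightarrow> finite V \<and> (\<forall>e\<in>E. e \<noteq> {} \<and> e \<subseteq> V)"

definition adj_in :: "'a set set \<Rightarrow> 'a set \<Rightarrow> ('a \<times> 'a) set" where
  "adj_in T S = {(x, y). {x, y} \<in> T \<and> x \<noteq> y \<and> x \<in> S \<and> y \<in> S}"

definition induces_connected :: "'a set set \<Rightarrow> 'a set \<Rightarrow> bool" where
  "induces_connected T S \<longleftrightarrow> (\<forall>x\<in>S. \<forall>y\<in>S. (x, y) \<in> (adj_in T S)\<^sup>*)"

definition graph_on :: "'a set \<Rightarrow> 'a set set \<Rightarrow> bool" where
  "graph_on V T \<longleftrightarrow> (\<forall>e\<in>T. \<exists>x y. x \<noteq> y \<and> x \<in> V \<and> y \<in> V \<and> e = {x, y})"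

definition is_tree :: "'a set \<Rightarrow> 'a set set \<Rightarrow> bool" where
  "is_tree V T \<longleftrightarrow> graph_on V T \<and> induces_connected T V \<and>
     (\<forall>e\<in>T. \<not> induces_connected (T - {e}) V)"

definition host_tree :: "'a set \<Rightarrow> 'a set set \<Rightarrow> 'a set set \<Rightarrow> bool" where
  "host_tree V E T \<longleftrightarrow> is_tree V T \<and> (\<forall>e\<in>E. induces_connected T e)"

definition hypertree :: "'a set \<Rightarrow> 'a set set \<Rightarrow> bool" where
  "hypertree V E \<longleftrightarrow> hypergraph V E \<and> (\<exists>T. host_tree V E T)"

definition I_H :: "'a set \<Rightarrow> 'a set set \<Rightarrow> 'a set \<Rightarrow> 'a set" where
  "I_H V E X = (if \<exists>e\<in>E. X \<subseteq> e then \<Inter>{e\<in>E. X \<subseteq> e} else V)"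

definition is_vpath :: "'a set set \<Rightarrow> 'a list \<Rightarrow> bool" where
  "is_vpath T ps \<longleftrightarrow> ps \<noteq> [] \<and> distinct ps \<and>
     (\<forall>i. Suc i < length ps \<longrightarrow> {ps ! i, ps ! Suc i} \<in> T)"

text \<open>Edges of the path T[u,v] (in a tree this path is unique).\<close>
definition path_edges :: "'a set set \<Rightarrow> 'a \<Rightarrow> 'a \<Rightarrow> 'a set set" where
  "path_edges T u v = {{ps ! i, ps ! Suc i} | ps i.
      is_vpath T ps \<and> hd ps = u \<and> last ps = v \<and> Suc i < length ps}"

end

theory Submission
  imports Defs
begin

lemma adj_sym: "(x,y) \<in> adj_in T S \<Longrightarrow> (y,x) \<in> adj_in T S"
  by (auto simp: adj_in_def insert_commute)

lemma rt_sym: "(x,y) \<in> (adj_in T S)\<^sup>* \<Longrightarrow> (y,x) \<in> (adj_in T S)\<^sup>*"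
proof (induction rule: rtrancl_induct)
  case base then show ?case by simp
next
  case (step w z)
  then have "(z,w) \<in> adj_in T S" by (simp add: adj_sym)
  then show ?case using step(3) by (rule converse_rtrancl_into_rtrancl)
qed

lemma adj_mono: "T1 \<subseteq> T2 \<Longrightarrow> S1 \<subseteq> S2 \<Longrightarrow> adj_in T1 S1 \<subseteq> adj_in T2 S2"
  by (auto simp: adj_in_def)

lemma rt_mono: "T1 \<subseteq> T2 \<Longrightarrow> S1 \<subseteq> S2 \<Longrightarrow> p \<in> (adj_in T1 S1)\<^sup>* \<Longrightarrow> p \<in> (adj_in T2 S2)\<^sup>*"
proof -
  assume a: "T1 \<subseteq> T2" "S1 \<subseteq> S2" "p \<in> (adj_in T1 S1)\<^sup>*"
  have "adj_in T1 S1 \<subseteq> adj_in T2 S2" using a(1,2) by (rule adj_mono)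
  then have "(adj_in T1 S1)\<^sup>* \<subseteq> (adj_in T2 S2)\<^sup>*" by (rule rtrancl_mono)
  then show ?thesis using a(3) by (rule subsetD)
qed

lemma swap_conn:
  assumes "(x,y) \<in> (adj_in T' S)\<^sup>*" "T - {{x,y}} \<subseteq> T'"
  shows "(adj_in T S)\<^sup>* \<subseteq> (adj_in T' S)\<^sup>*"
proof (rule rtrancl_subset_rtrancl, rule subsetI)
  fix p assume "p \<in> adj_in T S"
  then obtain c d where p: "p = (c,d)" "{c,d} \<in> T" "c \<noteq> d" "c \<in> S" "d \<in> S"
    by (auto simp: adj_in_def)
  show "p \<in> (adj_in T' S)\<^sup>*"
  proof (cases "{c,d} = {x,y}")
    case True
    then have "(c=x \<and> d=y) \<or> (c=y \<and> d=x)" by (simp add: doubleton_eq_iff)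
    moreover have "(y,x) \<in> (adj_in T' S)\<^sup>*" using assms(1) by (rule rt_sym)
    ultimately show ?thesis using assms(1) p(1) by auto
  next
    case False
    then have "p \<in> adj_in T' S" using p assms(2) by (auto simp: adj_in_def)
    then show ?thesis by blast
  qed
qed

lemma tree_edge_cut:
  assumes "is_tree V T" "{a,b} \<in> T" "(a,b) \<in> (adj_in (T - {{a,b}}) V)\<^sup>*"
  shows False
proof -
  have sub: "(adj_in T V)\<^sup>* \<subseteq> (adj_in (T - {{a,b}}) V)\<^sup>*"
    using assms(3) by (rule swap_conn) simp
  have conn: "\<forall>x\<in>V. \<forall>y\<in>V. (x,y) \<in> (adj_in T V)\<^sup>*"
    using assms(1) by (simp add: is_tree_def induces_connected_def)
  have "induces_connected (T - {{a,b}}) V" unfolding induces_connected_def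
  proof (intro ballI)
    fix x y assume "x \<in> V" "y \<in> V"
    then have "(x,y) \<in> (adj_in T V)\<^sup>*" using conn by simp
    then show "(x,y) \<in> (adj_in (T - {{a,b}}) V)\<^sup>*" using sub by (rule subsetD[rotated])
  qed
  moreover have "\<not> induces_connected (T - {{a,b}}) V" using assms(1,2) by (simp add: is_tree_def)
  ultimately show False by contradiction
qed

lemma split_conn:
  assumes "(x,w) \<in> (adj_in T S)\<^sup>*"
  shows "(x,w) \<in> (adj_in (T-{{x,y}}) S)\<^sup>* \<or> (y,w) \<in> (adj_in (T-{{x,y}}) S)\<^sup>*"
  using assms
proof (induction rule: rtrancl_induct)
  case base then show ?case by simp
next
  case (step w z)
  show ?case
  proof (cases "{w,z} = {x,y}")
    case True
    have "z \<in> {x,y}" by (subst True[symmetric]) simp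
    then have "z = x \<or> z = y" by simp
    then show ?thesis by auto
  next
    case False
    then have wz: "(w,z) \<in> adj_in (T-{{x,y}}) S" using step(2) by (auto simp: adj_in_def)
    from step(3) show ?thesis
    proof
      assume "(x,w) \<in> (adj_in (T-{{x,y}}) S)\<^sup>*"
      then have "(x,z) \<in> (adj_in (T-{{x,y}}) S)\<^sup>*" using wz by (rule rtrancl_into_rtrancl)
      then show ?thesis by (rule disjI1)
    next
      assume "(y,w) \<in> (adj_in (T-{{x,y}}) S)\<^sup>*"
      then have "(y,z) \<in> (adj_in (T-{{x,y}}) S)\<^sup>*" using wz by (rule rtrancl_into_rtrancl)
      then show ?thesis by (rule disjI2)
    qed
  qed
qed

lemma lemK:
  assumes "(a,w) \<in> (r \<union> {(u,v),(v,u)})\<^sup>*"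
  shows "(a,w) \<in> r\<^sup>* \<or> (a,u) \<in> r\<^sup>* \<or> (a,v) \<in> r\<^sup>*"
  using assms
proof (induction rule: rtrancl_induct)
  case base then show ?case by simp
next
  case (step w z)
  show ?case
  proof (cases "(a,w) \<in> r\<^sup>*")
    case True
    from step(2) have "(w,z) \<in> r \<or> w = u \<or> w = v" by blast
    then show ?thesis using True rtrancl_into_rtrancl[of a w r z] by blast
  next
    case False then show ?thesis using step(3) by blast
  qed
qed

lemma vp_distinct: "is_vpath T ps \<Longrightarrow> distinct ps"
  by (simp add: is_vpath_def)

lemma vp_edge: "is_vpath T ps \<Longrightarrow> Suc i < length ps \<Longrightarrow> {ps!i, ps!Suc i} \<in> T"
  by (simp add: is_vpath_def)

lemma vp_ne: "is_vpath T ps \<Longrightarrow> ps \<noteq> []"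
  by (simp add: is_vpath_def)

lemma vpath_in_V:
  assumes "graph_on V T" "is_vpath T ps" "Suc i < length ps"
  shows "ps!i \<in> V" "ps!Suc i \<in> V" "ps!i \<noteq> ps!Suc i"
proof -
  have "{ps!i, ps!Suc i} \<in> T" using assms(2,3) by (rule vp_edge)
  then obtain a b where "a \<noteq> b" "a \<in> V" "b \<in> V" "{ps!i, ps!Suc i} = {a,b}"
    using assms(1) unfolding graph_on_def by blast
  then show "ps!i \<in> V" "ps!Suc i \<in> V" by (auto simp: doubleton_eq_iff)
  have "distinct ps" using assms(2) by (rule vp_distinct)
  then show "ps!i \<noteq> ps!Suc i" using assms(3) by (simp add: nth_eq_iff_index_eq)
qed

lemma prefix_conn:
  assumes "graph_on V T" "is_vpath T ps" "Suc i < length ps"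
  shows "k \<le> i \<Longrightarrow> (ps!0, ps!k) \<in> (adj_in (T - {{ps!i, ps!Suc i}}) V)\<^sup>*"
proof (induction k)
  case 0 then show ?case by simp
next
  case (Suc k)
  have d: "distinct ps" using assms(2) by (rule vp_distinct)
  have k: "Suc k < length ps" using Suc.prems assms(3) by simp
  have ne1: "ps!k \<noteq> ps!i" using d Suc.prems assms(3) by (simp add: nth_eq_iff_index_eq)
  have ne2: "ps!k \<noteq> ps!Suc i" using d Suc.prems assms(3) by (simp add: nth_eq_iff_index_eq)
  have "{ps!k, ps!Suc k} \<noteq> {ps!i, ps!Suc i}" using ne1 ne2 by (auto simp: doubleton_eq_iff)
  moreover have "{ps!k, ps!Suc k} \<in> T" using assms(2) k by (rule vp_edge)
  ultimately have "(ps!k, ps!Suc k) \<in> adj_in (T - {{ps!i, ps!Suc i}}) V"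
    using vpath_in_V[OF assms(1,2) k] by (auto simp: adj_in_def)
  moreover have "(ps!0, ps!k) \<in> (adj_in (T - {{ps!i, ps!Suc i}}) V)\<^sup>*" using Suc.IH Suc.prems by simp
  ultimately show ?case by (meson rtrancl_into_rtrancl)
qed

lemma suffix_conn:
  assumes "graph_on V T" "is_vpath T ps" "Suc i < length ps"
  shows "Suc i \<le> k \<Longrightarrow> k < length ps \<Longrightarrow> (ps!Suc i, ps!k) \<in> (adj_in (T - {{ps!i, ps!Suc i}}) V)\<^sup>*"
proof (induction k)
  case 0 then show ?case by simp
next
  case (Suc k)
  show ?case
  proof (cases "Suc k = Suc i")
    case True then show ?thesis by simp
  next
    case False
    then have ki: "Suc i \<le> k" using Suc.prems by simp
    have d: "distinct ps" using assms(2) by (rule vp_distinct)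
    have k: "Suc k < length ps" using Suc.prems by simp
    have ne1: "ps!Suc k \<noteq> ps!i" using d ki k by (simp add: nth_eq_iff_index_eq)
    have ne2: "ps!Suc k \<noteq> ps!Suc i" using d ki k by (simp add: nth_eq_iff_index_eq)
    have "{ps!k, ps!Suc k} \<noteq> {ps!i, ps!Suc i}" using ne1 ne2 by (auto simp: doubleton_eq_iff)
    moreover have "{ps!k, ps!Suc k} \<in> T" using assms(2) k by (rule vp_edge)
    ultimately have "(ps!k, ps!Suc k) \<in> adj_in (T - {{ps!i, ps!Suc i}}) V"
      using vpath_in_V[OF assms(1,2) k] by (auto simp: adj_in_def)
    moreover have "(ps!Suc i, ps!k) \<in> (adj_in (T - {{ps!i, ps!Suc i}}) V)\<^sup>*" using Suc.IH ki k by simp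
    ultimately show ?thesis by (meson rtrancl_into_rtrancl)
  qed
qed

lemma path_ends:
  assumes "is_vpath T ps" "hd ps = u" "last ps = v"
  shows "ps!0 = u" "ps!(length ps - 1) = v"
  using assms vp_ne[OF assms(1)] by (simp_all add: hd_conv_nth last_conv_nth)

lemma path_cut:
  assumes "is_tree V T" "is_vpath T ps" "hd ps = u" "last ps = v" "Suc i < length ps"
  shows "(u,v) \<notin> (adj_in (T - {{ps!i, ps!Suc i}}) V)\<^sup>*"
proof
  assume uv: "(u,v) \<in> (adj_in (T - {{ps!i, ps!Suc i}}) V)\<^sup>*"
  have g: "graph_on V T" using assms(1) by (simp add: is_tree_def)
  have "(ps!0, ps!i) \<in> (adj_in (T - {{ps!i, ps!Suc i}}) V)\<^sup>*"
    using prefix_conn[OF g assms(2,5)] by simp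
  then have "(ps!i, ps!0) \<in> (adj_in (T - {{ps!i, ps!Suc i}}) V)\<^sup>*" by (rule rt_sym)
  then have xu: "(ps!i, u) \<in> (adj_in (T - {{ps!i, ps!Suc i}}) V)\<^sup>*"
    using path_ends(1)[OF assms(2,3,4)] by simp
  have "(ps!Suc i, ps!(length ps - 1)) \<in> (adj_in (T - {{ps!i, ps!Suc i}}) V)\<^sup>*"
    using suffix_conn[OF g assms(2,5)] assms(5) by simp
  then have "(ps!(length ps - 1), ps!Suc i) \<in> (adj_in (T - {{ps!i, ps!Suc i}}) V)\<^sup>*" by (rule rt_sym)
  then have vy: "(v, ps!Suc i) \<in> (adj_in (T - {{ps!i, ps!Suc i}}) V)\<^sup>*"
    using path_ends(2)[OF assms(2,3,4)] by simp
  have "(ps!i, ps!Suc i) \<in> (adj_in (T - {{ps!i, ps!Suc i}}) V)\<^sup>*"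
    using rtrancl_trans[OF rtrancl_trans[OF xu uv] vy] .
  moreover have "{ps!i, ps!Suc i} \<in> T" using assms(2,5) by (rule vp_edge)
  ultimately show False using tree_edge_cut[OF assms(1)] by blast
qed

lemma exists_vpath:
  assumes "(u,v) \<in> (adj_in T S)\<^sup>*"
  shows "\<exists>ps. is_vpath T ps \<and> hd ps = u \<and> last ps = v"
  using assms
proof (induction rule: rtrancl_induct)
  case base
  have "is_vpath T [u]" by (simp add: is_vpath_def)
  then show ?case by force
next
  case (step w z)
  then obtain ps where ps: "is_vpath T ps" "hd ps = u" "last ps = w" by blast
  have wz: "{w,z} \<in> T" using step(2) by (simp add: adj_in_def)
  show ?case
  proof (cases "z \<in> set ps")
    case True
    then obtain n where n: "n < length ps" "ps!n = z" by (metis in_set_conv_nth)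
    let ?q = "take (Suc n) ps"
    have "is_vpath T ?q" using ps(1) n unfolding is_vpath_def by auto
    moreover have "hd ?q = u" using ps n by (auto simp: is_vpath_def)
    moreover have "last ?q = z" using n by (simp add: take_Suc_conv_app_nth)
    ultimately show ?thesis by blast
  next
    case False
    let ?q = "ps @ [z]"
    have "is_vpath T ?q" unfolding is_vpath_def
    proof (intro conjI allI impI)
      show "?q \<noteq> []" by simp
      show "distinct ?q" using ps(1) False by (simp add: is_vpath_def)
    next
      fix j assume j: "Suc j < length ?q"
      show "{?q ! j, ?q ! Suc j} \<in> T"
      proof (cases "Suc j < length ps")
        case True then show ?thesis using ps(1) by (simp add: is_vpath_def nth_append)
      next
        case False
        then have "j = length ps - 1" "ps \<noteq> []" using j ps(1) by (auto simp: is_vpath_def)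
        then show ?thesis using wz ps(3) False by (simp add: nth_append last_conv_nth)
      qed
    qed
    moreover have "hd ?q = u" using ps by (auto simp: is_vpath_def)
    moreover have "last ?q = z" by simp
    ultimately show ?thesis by blast
  qed
qed

lemma crossing: "P 0 \<Longrightarrow> \<not> P m \<Longrightarrow> \<exists>i<m. P i \<and> \<not> P (Suc i)"
proof (induction m)
  case 0 then show ?case by simp
next
  case (Suc m)
  show ?case
  proof (cases "P m")
    case True
    then show ?thesis using Suc.prems(2) lessI by blast
  next
    case False
    then obtain i where i: "i < m" "P i" "\<not> P (Suc i)" using Suc.IH Suc.prems(1) by blast
    then show ?thesis using less_SucI by blast
  qed
qed

lemma I_H_cong:
  assumes "{f\<in>E. X \<subseteq> f} = {f\<in>E. Y \<subseteq> f}"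
  shows "I_H V E X = I_H V E Y"
proof -
  have eq: "(\<exists>e\<in>E. X \<subseteq> e) = (\<exists>e\<in>E. Y \<subseteq> e)" using assms by blast
  show ?thesis unfolding I_H_def by (simp only: assms eq)
qed

lemma I_H_sup: "X \<subseteq> V \<Longrightarrow> X \<subseteq> I_H V E X"
  unfolding I_H_def by auto

lemma I_H_sub: "f \<in> E \<Longrightarrow> X \<subseteq> f \<Longrightarrow> I_H V E X \<subseteq> f"
  unfolding I_H_def by auto


lemma len2:
  assumes "is_vpath T ps" "hd ps = u" "last ps = v" "u \<noteq> v"
  shows "Suc 0 < length ps"
proof (cases ps)
  case Nil then show ?thesis using vp_ne[OF assms(1)] by simp
next
  case (Cons a l)
  then show ?thesis using assms(2,3,4) by (cases l) auto
qed

lemma dir1: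
  assumes hyp: "hypergraph V E" and T: "host_tree V E T"
    and T': "host_tree V E T'" "{u,v} \<in> T'"
    and uV: "u \<in> V" and vV: "v \<in> V" and uv: "u \<noteq> v"
  shows "\<exists>e\<in>path_edges T u v. I_H V E {u, v} = I_H V E e"
proof -
  have trT: "is_tree V T" using T by (simp add: host_tree_def)
  have trT': "is_tree V T'" using T'(1) by (simp add: host_tree_def)
  have "\<forall>x\<in>V. \<forall>y\<in>V. (x,y) \<in> (adj_in T V)\<^sup>*"
    using trT by (simp add: is_tree_def induces_connected_def)
  then have "(u,v) \<in> (adj_in T V)\<^sup>*" using uV vV by simp
  then obtain ps where ps: "is_vpath T ps" "hd ps = u" "last ps = v"
    using exists_vpath[of u v T V] by blast
  have len: "Suc 0 < length ps" using len2[OF ps uv] .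
  define R' where "R' = adj_in (T' - {{u,v}}) V"
  define P where "P = (\<lambda>k. (u, ps!k) \<in> R'\<^sup>*)"
  have P0: "P 0" using path_ends(1)[OF ps] by (simp add: P_def)
  have "(u,v) \<notin> R'\<^sup>*"
  proof
    assume "(u,v) \<in> R'\<^sup>*"
    then show False using tree_edge_cut[OF trT' T'(2)] by (simp add: R'_def)
  qed
  then have Pn: "\<not> P (length ps - 1)" using path_ends(2)[OF ps] by (simp add: P_def)
  obtain i where i: "i < length ps - 1" "P i" "\<not> P (Suc i)"
    using crossing[of P, OF P0 Pn] by blast
  have si: "Suc i < length ps" using i(1) by simp
  define x where "x = ps!i"
  define y where "y = ps!Suc i"
  have ein: "{x,y} \<in> path_edges T u v" unfolding path_edges_def x_def y_def mem_Collect_eq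
    apply (rule exI[of _ ps], rule exI[of _ i])
    using ps si by simp
  have cut: "(u,v) \<notin> (adj_in (T - {{x,y}}) V)\<^sup>*"
    unfolding x_def y_def by (rule path_cut[OF trT ps si])
  have "{f\<in>E. {u,v} \<subseteq> f} = {f\<in>E. {x,y} \<subseteq> f}"
  proof (intro set_eqI iffI)
    fix f assume "f \<in> {f\<in>E. {u,v} \<subseteq> f}"
    then have f: "f \<in> E" "u \<in> f" "v \<in> f" by auto
    have fV: "f \<subseteq> V" using hyp f(1) by (simp add: hypergraph_def)
    have "{x,y} \<subseteq> f"
    proof (rule ccontr)
      assume nf: "\<not> {x,y} \<subseteq> f"
      have "induces_connected T f" using T f(1) by (simp add: host_tree_def)
      then have c: "(u,v) \<in> (adj_in T f)\<^sup>*" using f by (simp add: induces_connected_def)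
      have "adj_in T f \<subseteq> adj_in (T - {{x,y}}) V"
      proof
        fix p assume "p \<in> adj_in T f"
        then obtain c d where p: "p = (c,d)" "{c,d} \<in> T" "c \<noteq> d" "c \<in> f" "d \<in> f"
          by (auto simp: adj_in_def)
        have "{c,d} \<noteq> {x,y}" using nf p(4,5) by auto
        then show "p \<in> adj_in (T - {{x,y}}) V" using p fV by (auto simp: adj_in_def)
      qed
      then have "(adj_in T f)\<^sup>* \<subseteq> (adj_in (T - {{x,y}}) V)\<^sup>*" by (rule rtrancl_mono)
      then show False using c cut by (simp add: subset_iff)
    qed
    then show "f \<in> {f\<in>E. {x,y} \<subseteq> f}" using f by simp
  next
    fix f assume "f \<in> {f\<in>E. {x,y} \<subseteq> f}"
    then have f: "f \<in> E" "x \<in> f" "y \<in> f" by auto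
    have fV: "f \<subseteq> V" using hyp f(1) by (simp add: hypergraph_def)
    have "{u,v} \<subseteq> f"
    proof (rule ccontr)
      assume nf: "\<not> {u,v} \<subseteq> f"
      have "induces_connected T' f" using T'(1) f(1) by (simp add: host_tree_def)
      then have c: "(x,y) \<in> (adj_in T' f)\<^sup>*" using f by (simp add: induces_connected_def)
      have "adj_in T' f \<subseteq> R'"
      proof
        fix p assume "p \<in> adj_in T' f"
        then obtain c d where p: "p = (c,d)" "{c,d} \<in> T'" "c \<noteq> d" "c \<in> f" "d \<in> f"
          by (auto simp: adj_in_def)
        have "{c,d} \<noteq> {u,v}" using nf p(4,5) by auto
        then show "p \<in> R'" using p fV by (auto simp: adj_in_def R'_def)
      qed
      then have "(adj_in T' f)\<^sup>* \<subseteq> R'\<^sup>*" by (rule rtrancl_mono)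
      then have "(x,y) \<in> R'\<^sup>*" using c by (rule subsetD)
      moreover have "(u,x) \<in> R'\<^sup>*" using i(2) by (simp add: P_def x_def)
      ultimately have "(u,y) \<in> R'\<^sup>*" by (rule rtrancl_trans[rotated])
      then show False using i(3) by (simp add: P_def y_def)
    qed
    then show "f \<in> {f\<in>E. {u,v} \<subseteq> f}" using f by simp
  qed
  then have "I_H V E {u,v} = I_H V E {x,y}" by (rule I_H_cong)
  then show ?thesis using ein by (intro bexI[of _ "{x,y}"])
qed


lemma dir2:
  assumes hyp: "hypergraph V E" and T: "host_tree V E T"
    and uV: "u \<in> V" and vV: "v \<in> V" and uv: "u \<noteq> v"
    and ps: "is_vpath T ps" "hd ps = u" "last ps = v" and si: "Suc i < length ps"
    and I: "I_H V E {u,v} = I_H V E {ps!i, ps!Suc i}"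
  shows "\<exists>T'. host_tree V E T' \<and> {u,v} \<in> T'"
proof -
  have trT: "is_tree V T" using T by (simp add: host_tree_def)
  have g: "graph_on V T" using trT by (simp add: is_tree_def)
  define x where "x = ps!i"
  define y where "y = ps!Suc i"
  define e where "e = {x,y}"
  have xV: "x \<in> V" and yV: "y \<in> V" and xy: "x \<noteq> y"
    using vpath_in_V[OF g ps(1) si] by (simp_all add: x_def y_def)
  have eT: "e \<in> T" unfolding e_def x_def y_def using ps(1) si by (rule vp_edge)
  have cut: "(u,v) \<notin> (adj_in (T - {e}) V)\<^sup>*"
    unfolding e_def x_def y_def by (rule path_cut[OF trT ps si])
  have "(ps!0, ps!i) \<in> (adj_in (T - {e}) V)\<^sup>*"
    unfolding e_def x_def y_def using prefix_conn[OF g ps(1) si] by simp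
  then have "(ps!i, ps!0) \<in> (adj_in (T - {e}) V)\<^sup>*" by (rule rt_sym)
  then have pre: "(x,u) \<in> (adj_in (T - {e}) V)\<^sup>*"
    using path_ends(1)[OF ps] by (simp add: x_def)
  have "(ps!Suc i, ps!(length ps - 1)) \<in> (adj_in (T - {e}) V)\<^sup>*"
    unfolding e_def x_def y_def using suffix_conn[OF g ps(1) si] si by simp
  then have suf: "(y,v) \<in> (adj_in (T - {e}) V)\<^sup>*"
    using path_ends(2)[OF ps] by (simp add: y_def)
  define T' where "T' = insert {u,v} (T - {e})"
  have sub: "T - {e} \<subseteq> T'" by (auto simp: T'_def)
  have uvT': "{u,v} \<in> T'" by (simp add: T'_def)
  have uvadj: "(u,v) \<in> adj_in T' V" using uV vV uv by (simp add: adj_in_def T'_def)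
  have xyT': "(x,y) \<in> (adj_in T' V)\<^sup>*"
  proof -
    have a: "(x,u) \<in> (adj_in T' V)\<^sup>*" using rt_mono[OF sub subset_refl pre] .
    have "(y,v) \<in> (adj_in T' V)\<^sup>*" using rt_mono[OF sub subset_refl suf] .
    then have b: "(v,y) \<in> (adj_in T' V)\<^sup>*" by (rule rt_sym)
    have "(x,v) \<in> (adj_in T' V)\<^sup>*" using a uvadj by (rule rtrancl_into_rtrancl)
    then show ?thesis using b by (rule rtrancl_trans)
  qed
  have graph: "graph_on V T'" unfolding graph_on_def
  proof
    fix h assume "h \<in> T'"
    then have "h = {u,v} \<or> h \<in> T" by (auto simp: T'_def)
    then show "\<exists>x y. x \<noteq> y \<and> x \<in> V \<and> y \<in> V \<and> h = {x, y}"
    proof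
      assume "h = {u,v}" then show ?thesis using uV vV uv by blast
    next
      assume "h \<in> T" then show ?thesis using g by (simp add: graph_on_def)
    qed
  qed
  have connT: "\<forall>p\<in>V. \<forall>q\<in>V. (p,q) \<in> (adj_in T V)\<^sup>*"
    using trT by (simp add: is_tree_def induces_connected_def)
  have subR: "(adj_in T V)\<^sup>* \<subseteq> (adj_in T' V)\<^sup>*"
    using xyT' by (rule swap_conn) (rule sub[unfolded e_def])
  have conn: "induces_connected T' V" unfolding induces_connected_def
  proof (intro ballI)
    fix p q assume "p \<in> V" "q \<in> V"
    then have "(p,q) \<in> (adj_in T V)\<^sup>*" using connT by simp
    then show "(p,q) \<in> (adj_in T' V)\<^sup>*" using subR by (rule subsetD[rotated])
  qed
  have minimal: "\<forall>h\<in>T'. \<not> induces_connected (T' - {h}) V"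
  proof (intro ballI notI)
    fix h assume hT': "h \<in> T'" and c: "induces_connected (T' - {h}) V"
    have ch: "\<forall>p\<in>V. \<forall>q\<in>V. (p,q) \<in> (adj_in (T' - {h}) V)\<^sup>*"
      using c by (simp add: induces_connected_def)
    show False
    proof (cases "h = {u,v}")
      case True
      have "T' - {h} \<subseteq> T - {e}" using True by (auto simp: T'_def)
      moreover have "(u,v) \<in> (adj_in (T' - {h}) V)\<^sup>*" using ch uV vV by simp
      ultimately have "(u,v) \<in> (adj_in (T - {e}) V)\<^sup>*" using rt_mono[OF _ subset_refl] by blast
      then show False using cut by contradiction
    next
      case False
      then have hT: "h \<in> T" and he: "h \<noteq> e" using hT' by (auto simp: T'_def)
      obtain a b where ab: "a \<noteq> b" "a \<in> V" "b \<in> V" "h = {a,b}"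
        using g hT unfolding graph_on_def by blast
      define r where "r = adj_in (T - {e} - {h}) V"
      have ab1: "(a,b) \<in> (adj_in (T' - {h}) V)\<^sup>*" using ch ab by simp
      have rs: "adj_in (T' - {h}) V \<subseteq> r \<union> {(u,v),(v,u)}"
      proof
        fix p assume "p \<in> adj_in (T' - {h}) V"
        then obtain c d where p: "p = (c,d)" "{c,d} \<in> T' - {h}" "c \<noteq> d" "c \<in> V" "d \<in> V"
          by (auto simp: adj_in_def)
        show "p \<in> r \<union> {(u,v),(v,u)}"
        proof (cases "{c,d} = {u,v}")
          case True
          then have "(c=u \<and> d=v) \<or> (c=v \<and> d=u)" by (simp add: doubleton_eq_iff)
          then show ?thesis using p(1) by auto
        next
          case False
          then have "{c,d} \<in> T - {e} - {h}" using p(2) by (auto simp: T'_def)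
          then show ?thesis using p by (auto simp: r_def adj_in_def)
        qed
      qed
      have rs': "(adj_in (T' - {h}) V)\<^sup>* \<subseteq> (r \<union> {(u,v),(v,u)})\<^sup>*" using rs by (rule rtrancl_mono)
      have ab2: "(a,b) \<in> (r \<union> {(u,v),(v,u)})\<^sup>*" using ab1 rs' by (rule subsetD[rotated])
      have "(b,a) \<in> (adj_in (T' - {h}) V)\<^sup>*" using ab1 by (rule rt_sym)
      then have ba2: "(b,a) \<in> (r \<union> {(u,v),(v,u)})\<^sup>*" using rs' by (rule subsetD[rotated])
      have K1: "(a,b) \<in> r\<^sup>* \<or> (a,u) \<in> r\<^sup>* \<or> (a,v) \<in> r\<^sup>*" using ab2 by (rule lemK)
      have K2: "(b,a) \<in> r\<^sup>* \<or> (b,u) \<in> r\<^sup>* \<or> (b,v) \<in> r\<^sup>*" using ba2 by (rule lemK)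
      have symr: "\<And>p q. (p,q) \<in> r\<^sup>* \<Longrightarrow> (q,p) \<in> r\<^sup>*" unfolding r_def by (rule rt_sym)
      have bad1: "(a,b) \<notin> r\<^sup>*"
      proof
        assume "(a,b) \<in> r\<^sup>*"
        moreover have "r \<subseteq> adj_in (T - {{a,b}}) V" unfolding r_def using ab(4)
          by (intro adj_mono) auto
        ultimately have "(a,b) \<in> (adj_in (T - {{a,b}}) V)\<^sup>*" using rtrancl_mono by blast
        moreover have "{a,b} \<in> T" using hT ab(4) by simp
        ultimately show False using tree_edge_cut[OF trT] by blast
      qed
      have RT: "r\<^sup>* \<subseteq> (adj_in (T - {e}) V)\<^sup>*" unfolding r_def
        by (intro rtrancl_mono adj_mono) auto
      have abE: "(a,b) \<in> adj_in (T - {e}) V" using hT he ab by (auto simp: adj_in_def)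
      have bad2: "\<not> ((u,a) \<in> r\<^sup>* \<and> (b,v) \<in> r\<^sup>*)"
      proof
        assume h: "(u,a) \<in> r\<^sup>* \<and> (b,v) \<in> r\<^sup>*"
        have "(u,a) \<in> (adj_in (T - {e}) V)\<^sup>*" using h RT by blast
        then have "(u,b) \<in> (adj_in (T - {e}) V)\<^sup>*" using abE by (rule rtrancl_into_rtrancl)
        moreover have "(b,v) \<in> (adj_in (T - {e}) V)\<^sup>*" using h RT by blast
        ultimately have "(u,v) \<in> (adj_in (T - {e}) V)\<^sup>*" by (rule rtrancl_trans)
        then show False using cut by contradiction
      qed
      have bad3: "\<not> ((v,a) \<in> r\<^sup>* \<and> (b,u) \<in> r\<^sup>*)"
      proof
        assume h: "(v,a) \<in> r\<^sup>* \<and> (b,u) \<in> r\<^sup>*"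
        have "(v,a) \<in> (adj_in (T - {e}) V)\<^sup>*" using h RT by blast
        then have "(v,b) \<in> (adj_in (T - {e}) V)\<^sup>*" using abE by (rule rtrancl_into_rtrancl)
        moreover have "(b,u) \<in> (adj_in (T - {e}) V)\<^sup>*" using h RT by blast
        ultimately have "(v,u) \<in> (adj_in (T - {e}) V)\<^sup>*" by (rule rtrancl_trans)
        then have "(u,v) \<in> (adj_in (T - {e}) V)\<^sup>*" by (rule rt_sym)
        then show False using cut by contradiction
      qed
      have nba: "(b,a) \<notin> r\<^sup>*" using bad1 symr by blast
      show False
      proof (cases "(a,u) \<in> r\<^sup>*")
        case au: True
        then have ua: "(u,a) \<in> r\<^sup>*" by (rule symr)
        show False
        proof (cases "(b,u) \<in> r\<^sup>*")
          case True
          then have "(u,b) \<in> r\<^sup>*" by (rule symr)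
          then have "(a,b) \<in> r\<^sup>*" using au by (rule rtrancl_trans[rotated])
          then show False using bad1 by contradiction
        next
          case False
          then have "(b,v) \<in> r\<^sup>*" using K2 nba by simp
          then show False using bad2 ua by simp
        qed
      next
        case nau: False
        then have av: "(a,v) \<in> r\<^sup>*" using K1 bad1 by simp
        then have va: "(v,a) \<in> r\<^sup>*" by (rule symr)
        show False
        proof (cases "(b,v) \<in> r\<^sup>*")
          case True
          then have "(v,b) \<in> r\<^sup>*" by (rule symr)
          then have "(a,b) \<in> r\<^sup>*" using av by (rule rtrancl_trans[rotated])
          then show False using bad1 by contradiction
        next
          case False
          then have "(b,u) \<in> r\<^sup>*" using K2 nba by simp
          then show False using bad3 va by simp
        qed
      qed
    qed
  qed
  have hyper: "\<forall>f\<in>E. induces_connected T' f"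
  proof
    fix f assume fE: "f \<in> E"
    have fV: "f \<subseteq> V" using hyp fE by (simp add: hypergraph_def)
    have cT: "\<forall>p\<in>f. \<forall>q\<in>f. (p,q) \<in> (adj_in T f)\<^sup>*"
      using T fE by (simp add: host_tree_def induces_connected_def)
    have sub2: "(adj_in T f)\<^sup>* \<subseteq> (adj_in T' f)\<^sup>*"
    proof (cases "x \<in> f \<and> y \<in> f")
      case True
      then have xf: "x \<in> f" and yf: "y \<in> f" by auto
      have "{u,v} \<subseteq> I_H V E {u,v}" using uV vV by (intro I_H_sup) simp
      also have "\<dots> = I_H V E e" using I by (simp add: e_def x_def y_def)
      also have "\<dots> \<subseteq> f" using fE by (rule I_H_sub) (simp add: e_def xf yf)
      finally have uf: "u \<in> f" and vf: "v \<in> f" by auto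
      have "(x,u) \<in> (adj_in T f)\<^sup>*" using cT xf uf by simp
      then have "(x,u) \<in> (adj_in (T - {{x,y}}) f)\<^sup>* \<or> (y,u) \<in> (adj_in (T - {{x,y}}) f)\<^sup>*"
        by (rule split_conn)
      moreover have "(y,u) \<notin> (adj_in (T - {{x,y}}) f)\<^sup>*"
      proof
        assume "(y,u) \<in> (adj_in (T - {{x,y}}) f)\<^sup>*"
        then have "(y,u) \<in> (adj_in (T - {e}) V)\<^sup>*" using rt_mono[OF subset_refl fV] by (simp add: e_def)
        then have "(u,y) \<in> (adj_in (T - {e}) V)\<^sup>*" by (rule rt_sym)
        then have "(u,v) \<in> (adj_in (T - {e}) V)\<^sup>*" using suf by (rule rtrancl_trans)
        then show False using cut by contradiction
      qed
      ultimately have xu: "(x,u) \<in> (adj_in (T - {e}) f)\<^sup>*" by (simp add: e_def)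
      have "(y,v) \<in> (adj_in T f)\<^sup>*" using cT yf vf by simp
      then have "(y,v) \<in> (adj_in (T - {{y,x}}) f)\<^sup>* \<or> (x,v) \<in> (adj_in (T - {{y,x}}) f)\<^sup>*"
        by (rule split_conn)
      moreover have "(x,v) \<notin> (adj_in (T - {{y,x}}) f)\<^sup>*"
      proof
        assume "(x,v) \<in> (adj_in (T - {{y,x}}) f)\<^sup>*"
        then have "(x,v) \<in> (adj_in (T - {e}) V)\<^sup>*" using rt_mono[OF subset_refl fV] by (simp add: e_def insert_commute)
        moreover have "(u,x) \<in> (adj_in (T - {e}) V)\<^sup>*" using pre by (rule rt_sym)
        ultimately have "(u,v) \<in> (adj_in (T - {e}) V)\<^sup>*" using rtrancl_trans by metis
        then show False using cut by contradiction
      qed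
      ultimately have yv: "(y,v) \<in> (adj_in (T - {e}) f)\<^sup>*" by (simp add: e_def insert_commute)
      have a: "(x,u) \<in> (adj_in T' f)\<^sup>*" using rt_mono[OF sub subset_refl xu] .
      have "(y,v) \<in> (adj_in T' f)\<^sup>*" using rt_mono[OF sub subset_refl yv] .
      then have b: "(v,y) \<in> (adj_in T' f)\<^sup>*" by (rule rt_sym)
      have uvf: "(u,v) \<in> adj_in T' f" using uf vf uv by (simp add: adj_in_def T'_def)
      have "(x,v) \<in> (adj_in T' f)\<^sup>*" using a uvf by (rule rtrancl_into_rtrancl)
      then have "(x,y) \<in> (adj_in T' f)\<^sup>*" using b by (rule rtrancl_trans)
      then show ?thesis by (rule swap_conn) (rule sub[unfolded e_def])
    next
      case False
      have "adj_in T f \<subseteq> adj_in T' f"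
      proof
        fix p assume "p \<in> adj_in T f"
        then obtain c d where p: "p = (c,d)" "{c,d} \<in> T" "c \<noteq> d" "c \<in> f" "d \<in> f"
          by (auto simp: adj_in_def)
        have "{c,d} \<noteq> e" using False p(4,5) by (auto simp: e_def)
        then have "{c,d} \<in> T'" using p(2) by (simp add: T'_def)
        then show "p \<in> adj_in T' f" using p by (simp add: adj_in_def)
      qed
      then show ?thesis by (rule rtrancl_mono)
    qed
    show "induces_connected T' f" unfolding induces_connected_def
    proof (intro ballI)
      fix p q assume "p \<in> f" "q \<in> f"
      then have "(p,q) \<in> (adj_in T f)\<^sup>*" using cT by simp
      then show "(p,q) \<in> (adj_in T' f)\<^sup>*" using sub2 by (rule subsetD[rotated])
    qed
  qed
  have "host_tree V E T'" unfolding host_tree_def is_tree_def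
    using graph conn minimal hyper by simp
  then show ?thesis using uvT' by blast
qed

theorem mainTheorem11:
  fixes V :: "'a set" and E :: "'a set set" and T :: "'a set set" and u v :: 'a
  assumes "hypertree V E"
    and "host_tree V E T"
    and "u \<in> V" and "v \<in> V" and "u \<noteq> v"
  shows "(\<exists>T'. host_tree V E T' \<and> {u, v} \<in> T') \<longleftrightarrow>
         (\<exists>e\<in>path_edges T u v. I_H V E {u, v} = I_H V E e)"
proof
  have hyp: "hypergraph V E" using assms(1) by (simp add: hypertree_def)
  {
    assume "\<exists>T'. host_tree V E T' \<and> {u, v} \<in> T'"
    then obtain T' where "host_tree V E T'" "{u,v} \<in> T'" by blast
    then show "\<exists>e\<in>path_edges T u v. I_H V E {u, v} = I_H V E e"
      using dir1[OF hyp assms(2) _ _ assms(3,4,5)] by blast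
  }
  {
    assume "\<exists>e\<in>path_edges T u v. I_H V E {u, v} = I_H V E e"
    then obtain e where e: "e \<in> path_edges T u v" "I_H V E {u, v} = I_H V E e" by blast
    from e(1) obtain ps i where ps: "e = {ps!i, ps!Suc i}" "is_vpath T ps" "hd ps = u"
        "last ps = v" "Suc i < length ps"
      unfolding path_edges_def by blast
    show "\<exists>T'. host_tree V E T' \<and> {u, v} \<in> T'"
      using dir2[OF hyp assms(2) assms(3,4,5) ps(2,3,4,5)] e(2) ps(1) by simp
  }
qed

end
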